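(* Let $(X,d)$ be a doubling proper metric space and $(\varepsilon_k)$ a sequence of positive reals tending to $0$. Let $A\subset X$ be such that for each $x\in A$ there is a completely parametrized rectifiable curve $\gamma:(\mathbb R,0)\to(X,x)$ with $\sup_{0<|h|\le1/k}\left|\frac{d(\gamma(h),\gamma(-h))}{2|h|}-1\right|\le\varepsilon_k$ for all $k$. Let $x_0$ be a $t$-density point of $A$, let $r_n\to0$ be positive, and suppose $(X,x_0,d/r_n)$ converges in the pointed Gromov–Hausdorff topology to $(Z,z_0)$. Then every point of $Z$ lies on a bi-infinite geodesic $\gamma:\mathbb R\to Z$ (i.e. $d(\gamma(s),\gamma(t))=|s-t|$ for all $s,t$) which is a locally uniform limit of rescalings $t\mapsto\hat\gamma_n(r_nt)$ of such completely parametrized curves $\hat\gamma_n$ passing through points of $A$.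
   Context: Complete parametrization: given a rectifiable curve $\gamma:[0,\ell]\to X$ parametrized by arclength and $t_0\in[0,\ell]$, its complete parametrization at $t_0$ is $\gamma^0:\mathbb R\to X$ with $\gamma^0(t)=\gamma(t+t_0)$ on $[-t_0,\ell-t_0]$, constant equal to $\gamma(0)$ on $(-\infty,-t_0]$ and to $\gamma(\ell)$ on $[\ell-t_0,\infty)$. A point $a\in A$ is a $t$-density point of $A$ if for every $\varepsilon>0$, $\lim_{r\to0}\frac1r\sup_{z\in B(a,r)}d(z,A\cap B(a,(1+\varepsilon)r))=0$. Convergence of curves is uniform convergence on compact subsets of $\mathbb R$, in a common space into which the rescaled balls isometrically embed. *)

theory Defs
  imports "HOL-Analysis.Analysis"
begin

definition proper_mspace :: "'a set \<Rightarrow> ('a \<Rightarrow> 'a \<Rightarrow> real) \<Rightarrow> bool" where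
  "proper_mspace M d \<longleftrightarrow> Metric_space M d \<and>
     (\<forall>x\<in>M. \<forall>R. compactin (Metric_space.mtopology M d) (Metric_space.mcball M d x R))"

definition doubling_mspace :: "'a set \<Rightarrow> ('a \<Rightarrow> 'a \<Rightarrow> real) \<Rightarrow> bool" where
  "doubling_mspace M d \<longleftrightarrow> Metric_space M d \<and>
     (\<exists>N::nat. \<forall>x\<in>M. \<forall>R>0. \<exists>F. finite F \<and> card F \<le> N \<and> F \<subseteq> M \<and>
        Metric_space.mball M d x R \<subseteq> (\<Union>y\<in>F. Metric_space.mball M d y (R/2)))"

definition curve_length :: "('a \<Rightarrow> 'a \<Rightarrow> real) \<Rightarrow> (real \<Rightarrow> 'a) \<Rightarrow> real \<Rightarrow> real \<Rightarrow> ereal" where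
  "curve_length d \<gamma> a b =
     (SUP p \<in> {(n, t). t 0 = a \<and> t n = b \<and> (\<forall>i<n. t i \<le> t (Suc i))}.
        ereal (\<Sum>i<fst p. d (\<gamma> (snd p i)) (\<gamma> (snd p (Suc i)))))"

definition arclength_curve :: "'a set \<Rightarrow> ('a \<Rightarrow> 'a \<Rightarrow> real) \<Rightarrow> (real \<Rightarrow> 'a) \<Rightarrow> real \<Rightarrow> bool" where
  "arclength_curve M d \<gamma> l \<longleftrightarrow> 0 \<le> l \<and> \<gamma> ` {0..l} \<subseteq> M \<and>
     (\<forall>a b. 0 \<le> a \<and> a \<le> b \<and> b \<le> l \<longrightarrow> curve_length d \<gamma> a b = ereal (b - a))"

definition complete_param :: "(real \<Rightarrow> 'a) \<Rightarrow> real \<Rightarrow> real \<Rightarrow> real \<Rightarrow> 'a" where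
  "complete_param \<gamma> l t0 =
     (\<lambda>t. if t \<le> - t0 then \<gamma> 0 else if l - t0 \<le> t then \<gamma> l else \<gamma> (t + t0))"

definition complete_curve_at :: "'a set \<Rightarrow> ('a \<Rightarrow> 'a \<Rightarrow> real) \<Rightarrow> 'a \<Rightarrow> (real \<Rightarrow> 'a) \<Rightarrow> bool" where
  "complete_curve_at M d x \<Gamma> \<longleftrightarrow>
     (\<exists>\<gamma> l t0. arclength_curve M d \<gamma> l \<and> 0 \<le> t0 \<and> t0 \<le> l \<and>
        \<Gamma> = complete_param \<gamma> l t0) \<and> \<Gamma> 0 = x"

definition good_curve_at :: "'a set \<Rightarrow> ('a \<Rightarrow> 'a \<Rightarrow> real) \<Rightarrow> (nat \<Rightarrow> real) \<Rightarrow> 'a \<Rightarrow> (real \<Rightarrow> 'a) \<Rightarrow> bool" where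
  "good_curve_at M d \<epsilon> x \<Gamma> \<longleftrightarrow> complete_curve_at M d x \<Gamma> \<and>
     (\<forall>k::nat. k \<ge> 1 \<longrightarrow>
        (\<forall>h::real. 0 < \<bar>h\<bar> \<and> \<bar>h\<bar> \<le> 1 / real k \<longrightarrow>
           \<bar>d (\<Gamma> h) (\<Gamma> (-h)) / (2 * \<bar>h\<bar>) - 1\<bar> \<le> \<epsilon> k))"

definition pt_set_dist :: "('a \<Rightarrow> 'a \<Rightarrow> real) \<Rightarrow> 'a \<Rightarrow> 'a set \<Rightarrow> real" where
  "pt_set_dist d z S = Inf (d z ` S)"

definition t_density_point :: "'a set \<Rightarrow> ('a \<Rightarrow> 'a \<Rightarrow> real) \<Rightarrow> 'a set \<Rightarrow> 'a \<Rightarrow> bool" where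
  "t_density_point M d A a \<longleftrightarrow> a \<in> A \<and>
     (\<forall>\<epsilon>>0. ((\<lambda>r. (1 / r) * Sup ((\<lambda>z. pt_set_dist d z (A \<inter> Metric_space.mball M d a ((1 + \<epsilon>) * r)))
                                   ` Metric_space.mball M d a r)) \<longlongrightarrow> 0) (at_right 0))"

definition isometric_embedding :: "'a set \<Rightarrow> ('a \<Rightarrow> 'a \<Rightarrow> real) \<Rightarrow> 'c set \<Rightarrow> ('c \<Rightarrow> 'c \<Rightarrow> real) \<Rightarrow> ('a \<Rightarrow> 'c) \<Rightarrow> bool" where
  "isometric_embedding M d W dW f \<longleftrightarrow> f ` M \<subseteq> W \<and> (\<forall>x\<in>M. \<forall>y\<in>M. dW (f x) (f y) = d x y)"

text \<open>A realization of the pointed Gromov-Hausdorff convergence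
  (X_n, p_n, d_n) -> (Z, z0, dZ) (with Z proper) inside a common metric space (W,dW):
  isometric embeddings f n of X_n and g of Z into W such that the base points converge and,
  for every R and e>0, eventually the R-balls around the base points lie in the
  e-neighbourhood of the other space.\<close>
definition pGH_realization ::
  "'a set \<Rightarrow> (nat \<Rightarrow> 'a \<Rightarrow> 'a \<Rightarrow> real) \<Rightarrow> (nat \<Rightarrow> 'a) \<Rightarrow> 'b set \<Rightarrow> ('b \<Rightarrow> 'b \<Rightarrow> real) \<Rightarrow> 'b
   \<Rightarrow> 'c set \<Rightarrow> ('c \<Rightarrow> 'c \<Rightarrow> real) \<Rightarrow> (nat \<Rightarrow> 'a \<Rightarrow> 'c) \<Rightarrow> ('b \<Rightarrow> 'c) \<Rightarrow> bool" where
  "pGH_realization X dn p Z dZ z0 W dW f g \<longleftrightarrow>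
     Metric_space W dW \<and> proper_mspace Z dZ \<and> z0 \<in> Z \<and>
     (\<forall>n. Metric_space X (dn n) \<and> p n \<in> X \<and> isometric_embedding X (dn n) W dW (f n)) \<and>
     isometric_embedding Z dZ W dW g \<and>
     (\<lambda>n. dW (f n (p n)) (g z0)) \<longlonglongrightarrow> 0 \<and>
     (\<forall>R e. e > 0 \<longrightarrow> (\<forall>\<^sub>F n in sequentially.
        (\<forall>x\<in>Metric_space.mcball X (dn n) (p n) R. \<exists>z\<in>Z. dW (f n x) (g z) < e) \<and>
        (\<forall>z\<in>Metric_space.mcball Z dZ z0 R. \<exists>x\<in>X. dW (f n x) (g z) < e)))"

end

theory Submission
  imports Defs "HOL-Library.Diagonal_Subsequence"
begin


lemma arclength_lip:
  assumes "arclength_curve M d \<gamma> l" "0 \<le> a" "a \<le> b" "b \<le> l"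
  shows "d (\<gamma> a) (\<gamma> b) \<le> b - a"
proof -
  let ?p = "(1::nat, \<lambda>i::nat. if i = 0 then a else b)"
  have mem: "?p \<in> {(n, t). t 0 = a \<and> t n = b \<and> (\<forall>i<n. t i \<le> t (Suc i))}"
    using assms by auto
  have "ereal (\<Sum>i<fst ?p. d (\<gamma> (snd ?p i)) (\<gamma> (snd ?p (Suc i)))) \<le> curve_length d \<gamma> a b"
    unfolding curve_length_def by (rule SUP_upper[OF mem])
  also have "\<dots> = ereal (b - a)" using assms unfolding arclength_curve_def by auto
  finally show ?thesis by simp
qed

lemma complete_curve_props:
  assumes "Metric_space M d" "complete_curve_at M d x \<Gamma>"
  shows "(\<forall>u. \<Gamma> u \<in> M) \<and> (\<forall>u v. d (\<Gamma> u) (\<Gamma> v) \<le> \<bar>u - v\<bar>) \<and> \<Gamma> 0 = x"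
proof -
  interpret Metric_space M d by fact
  obtain \<gamma> l t0 where ac: "arclength_curve M d \<gamma> l" and t0: "0 \<le> t0" "t0 \<le> l"
    and G: "\<Gamma> = complete_param \<gamma> l t0" and x: "\<Gamma> 0 = x"
    using assms(2) unfolding complete_curve_at_def by blast
  define c where "c u = max 0 (min l (u + t0))" for u
  have l0: "0 \<le> l" using t0 by simp
  have Gc: "\<Gamma> u = \<gamma> (c u)" for u
    unfolding G complete_param_def c_def using l0 by auto
  have cr: "0 \<le> c u" "c u \<le> l" for u unfolding c_def using l0 by auto
  have inM: "\<gamma> s \<in> M" if "0 \<le> s" "s \<le> l" for s
    using ac that unfolding arclength_curve_def by auto
  have lip: "d (\<gamma> s) (\<gamma> s') \<le> \<bar>s - s'\<bar>" if "0 \<le> s" "s \<le> l" "0 \<le> s'" "s' \<le> l" for s s'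
  proof (cases "s \<le> s'")
    case True then show ?thesis using arclength_lip[OF ac, of s s'] that by simp
  next
    case False then show ?thesis using arclength_lip[OF ac, of s' s] that commute by simp
  qed
  have cl: "\<bar>c u - c v\<bar> \<le> \<bar>u - v\<bar>" for u v unfolding c_def by auto
  show ?thesis
    using Gc cr inM lip cl x by (metis order_trans)
qed



lemma density_approx:
  assumes ms: "Metric_space M d" and td: "t_density_point M d A a" and AM: "A \<subseteq> M" and dp: "\<delta> > 0"
  shows "\<exists>\<rho>0>0. \<forall>\<rho> x. 0 < \<rho> \<and> \<rho> < \<rho>0 \<and> x \<in> M \<and> d x a < \<rho> \<longrightarrow> (\<exists>b\<in>A. d x b < \<delta> * \<rho>)"
proof -
  interpret Metric_space M d by fact
  have aA: "a \<in> A" using td unfolding t_density_point_def by blast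
  have aM: "a \<in> M" using aA AM by blast
  define S where "S \<rho> = A \<inter> mball a ((1 + 1) * \<rho>)" for \<rho>
  have lim: "((\<lambda>r. (1 / r) * Sup ((\<lambda>z. pt_set_dist d z (S r)) ` mball a r)) \<longlongrightarrow> 0) (at_right 0)"
  proof -
    have "\<forall>\<epsilon>>0. ((\<lambda>r. (1 / r) * Sup ((\<lambda>z. pt_set_dist d z (A \<inter> mball a ((1 + \<epsilon>) * r))) ` mball a r)) \<longlongrightarrow> 0) (at_right 0)"
      using td unfolding t_density_point_def by blast
    from this[rule_format, of 1] show ?thesis unfolding S_def by simp
  qed
  have "\<forall>\<^sub>F r in at_right 0. dist ((1 / r) * Sup ((\<lambda>z. pt_set_dist d z (S r)) ` mball a r)) 0 < \<delta>"
    using tendstoD[OF lim dp] .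
  then obtain b where b: "b > 0" and bP: "\<And>r. 0 < r \<Longrightarrow> r < b \<Longrightarrow>
      \<bar>(1 / r) * Sup ((\<lambda>z. pt_set_dist d z (S r)) ` mball a r)\<bar> < \<delta>"
    unfolding eventually_at_right_field by auto
  show ?thesis
  proof (intro exI[of _ b] conjI allI impI b)
    fix \<rho> x assume H: "0 < \<rho> \<and> \<rho> < b \<and> x \<in> M \<and> d x a < \<rho>"
    then have rp: "0 < \<rho>" by simp
    have aS: "a \<in> S \<rho>" unfolding S_def using aA aM rp by simp
    have le: "pt_set_dist d z (S \<rho>) \<le> d z a" for z
      unfolding pt_set_dist_def by (rule cInf_lower) (use aS in \<open>auto intro: bdd_belowI[of _ 0]\<close>)
    have bdd: "bdd_above ((\<lambda>z. pt_set_dist d z (S \<rho>)) ` mball a \<rho>)"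
      unfolding bdd_above_def
    proof (rule exI[of _ \<rho>], clarify)
      fix z assume "z \<in> mball a \<rho>"
      then have "d z a < \<rho>" using commute by simp
      then show "pt_set_dist d z (S \<rho>) \<le> \<rho>" using le[of z] by simp
    qed
    have xb: "x \<in> mball a \<rho>" using H aM commute by simp
    have "pt_set_dist d x (S \<rho>) \<le> Sup ((\<lambda>z. pt_set_dist d z (S \<rho>)) ` mball a \<rho>)"
      by (rule cSup_upper) (use xb bdd in auto)
    moreover have "(1 / \<rho>) * Sup ((\<lambda>z. pt_set_dist d z (S \<rho>)) ` mball a \<rho>) < \<delta>"
      using bP[of \<rho>] H by (meson abs_less_iff)
    ultimately have "pt_set_dist d x (S \<rho>) < \<delta> * \<rho>"
      using rp by (simp add: field_simps)
    then have "Inf (d x ` S \<rho>) < \<delta> * \<rho>" unfolding pt_set_dist_def .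
    then obtain y where "y \<in> S \<rho>" "d x y < \<delta> * \<rho>"
    proof -
      have "d x ` S \<rho> \<noteq> {}" using aS by blast
      from cInf_lessD[OF this \<open>Inf (d x ` S \<rho>) < \<delta> * \<rho>\<close>] show ?thesis using that by blast
    qed
    then show "\<exists>b\<in>A. d x b < \<delta> * \<rho>" unfolding S_def by blast
  qed
qed



lemma select_subseq:
  assumes "\<And>j. eventually (\<lambda>n. P n j) sequentially"
  shows "\<exists>\<phi>::nat\<Rightarrow>nat. strict_mono \<phi> \<and> (\<forall>j. P (\<phi> j) j)"
proof -
  have "\<forall>j. \<exists>N. \<forall>n\<ge>N. P n j" using assms unfolding eventually_sequentially by blast
  then obtain N where N: "\<And>j n. n \<ge> N j \<Longrightarrow> P n j" by metis
  define \<phi> where "\<phi> j = (\<Sum>i\<le>j. N i) + j" for j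
  have "strict_mono \<phi>"
    unfolding strict_mono_Suc_iff \<phi>_def by simp
  moreover have "\<phi> j \<ge> N j" for j
  proof -
    have "N j \<le> (\<Sum>i\<le>j. N i)" by (rule member_le_sum) auto
    then show ?thesis unfolding \<phi>_def by simp
  qed
  ultimately show ?thesis using N by blast
qed

lemma limitin_dist_tendsto:
  assumes ms: "Metric_space M d"
    and a: "limitin (Metric_space.mtopology M d) \<sigma> a F" and b: "limitin (Metric_space.mtopology M d) \<tau> b F"
  shows "((\<lambda>i. d (\<sigma> i) (\<tau> i)) \<longlongrightarrow> d a b) F"
proof -
  interpret Metric_space M d by fact
  have a': "a \<in> M" "eventually (\<lambda>i. \<sigma> i \<in> M) F" "((\<lambda>i. d (\<sigma> i) a) \<longlongrightarrow> 0) F"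
    using a limitin_metric_dist_null by auto
  have b': "b \<in> M" "eventually (\<lambda>i. \<tau> i \<in> M) F" "((\<lambda>i. d (\<tau> i) b) \<longlongrightarrow> 0) F"
    using b limitin_metric_dist_null by auto
  have "eventually (\<lambda>i. \<bar>d (\<sigma> i) (\<tau> i) - d a b\<bar> \<le> d (\<sigma> i) a + d (\<tau> i) b) F"
    using a'(2) b'(2)
  proof eventually_elim
    case (elim i)
    have "d (\<sigma> i) (\<tau> i) \<le> d (\<sigma> i) a + d a b + d b (\<tau> i)"
      using triangle[of "\<sigma> i" a "\<tau> i"] triangle[of a b "\<tau> i"] elim a'(1) b'(1) by linarith
    moreover have "d a b \<le> d a (\<sigma> i) + d (\<sigma> i) (\<tau> i) + d (\<tau> i) b"
      using triangle[of a "\<sigma> i" b] triangle[of "\<sigma> i" "\<tau> i" b] elim a'(1) b'(1) by linarith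
    ultimately show ?case using commute[of b "\<tau> i"] commute[of a "\<sigma> i"] by linarith
  qed
  then have ev: "eventually (\<lambda>i. norm (d (\<sigma> i) (\<tau> i) - d a b) \<le> d (\<sigma> i) a + d (\<tau> i) b) F"
    by simp
  have t0: "((\<lambda>i. d (\<sigma> i) a + d (\<tau> i) b) \<longlongrightarrow> 0) F"
    using tendsto_add[OF a'(3) b'(3)] by simp
  have "((\<lambda>i. d (\<sigma> i) (\<tau> i) - d a b) \<longlongrightarrow> 0) F"
    by (rule Lim_null_comparison[OF ev t0])
  then show ?thesis using Lim_null by (simp add: LIM_zero_cancel)
qed



lemma core:
  fixes Z :: "'b set" and dZ :: "'b \<Rightarrow> 'b \<Rightarrow> real" and W :: "'c set" and dW :: "'c \<Rightarrow> 'c \<Rightarrow> real"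
    and g :: "'b \<Rightarrow> 'c" and y :: "nat \<Rightarrow> real \<Rightarrow> 'c" and e :: "nat \<Rightarrow> real"
  assumes pZ: "proper_mspace Z dZ" and msW: "Metric_space W dW"
    and iso: "isometric_embedding Z dZ W dW g" and z0Z: "z0 \<in> Z"
    and yW: "\<And>j t. y j t \<in> W"
    and lip: "\<And>j s t. dW (y j s) (y j t) \<le> \<bar>s - t\<bar>"
    and appr: "\<And>j t. \<bar>t\<bar> \<le> real j \<Longrightarrow> \<exists>z'\<in>Z. dW (y j t) (g z') < 1 / (real j + 1) \<and> dZ z0 z' \<le> B + \<bar>t\<bar>"
    and sym: "\<And>j t. \<bar>t\<bar> \<le> real j \<Longrightarrow> dW (y j t) (y j (-t)) \<ge> 2 * \<bar>t\<bar> * (1 - e j)"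
    and e0: "e \<longlonglongrightarrow> 0"
    and zZ: "z \<in> Z" and yz: "\<And>j. dW (y j 0) (g z) < 2 / (real j + 1)"
  shows "\<exists>\<gamma> \<psi>. strict_mono \<psi> \<and> range \<gamma> \<subseteq> Z \<and> \<gamma> 0 = z \<and> (\<forall>s t. dZ (\<gamma> s) (\<gamma> t) = \<bar>s - t\<bar>) \<and>
     (\<forall>T>0. \<forall>\<epsilon>>0. eventually (\<lambda>i. \<forall>t\<in>{-T..T}. dW (y (\<psi> i) t) (g (\<gamma> t)) < \<epsilon>) sequentially)"
proof -
  have msZ: "Metric_space Z dZ" using pZ unfolding proper_mspace_def by blast
  interpret Z: Metric_space Z dZ by fact
  interpret W: Metric_space W dW by fact
  have cpt: "\<And>x R. x \<in> Z \<Longrightarrow> compactin Z.mtopology (Z.mcball x R)"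
    using pZ unfolding proper_mspace_def by blast
  have gW: "\<And>x. x \<in> Z \<Longrightarrow> g x \<in> W" and gd: "\<And>x x'. x \<in> Z \<Longrightarrow> x' \<in> Z \<Longrightarrow> dW (g x) (g x') = dZ x x'"
    using iso unfolding isometric_embedding_def by auto
  define Pz where "Pz j t z' \<longleftrightarrow> z' \<in> Z \<and> dW (y j t) (g z') < 1 / (real j + 1) \<and> dZ z0 z' \<le> B + \<bar>t\<bar>" for j t z'
  define zz where "zz j t = (if \<exists>z'. Pz j t z' then SOME z'. Pz j t z' else z0)" for j t
  have zzZ: "zz j t \<in> Z" for j t
    unfolding zz_def using z0Z by (auto intro: someI2_ex simp: Pz_def)
  have zzP: "Pz j t (zz j t)" if "\<bar>t\<bar> \<le> real j" for j t
  proof -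
    have "\<exists>z'. Pz j t z'" using appr[OF that] unfolding Pz_def by blast
    then show ?thesis unfolding zz_def by (auto intro: someI_ex)
  qed
  have E1: "dZ (zz j s) (zz j t) \<le> \<bar>s - t\<bar> + 2 / (real j + 1)" if "\<bar>s\<bar> \<le> real j" "\<bar>t\<bar> \<le> real j" for j s t
  proof -
    have a: "dW (y j s) (g (zz j s)) < 1 / (real j + 1)" "dW (y j t) (g (zz j t)) < 1 / (real j + 1)"
      using zzP[OF that(1)] zzP[OF that(2)] unfolding Pz_def by auto
    have "dZ (zz j s) (zz j t) = dW (g (zz j s)) (g (zz j t))" using gd zzZ by simp
    also have "\<dots> \<le> dW (g (zz j s)) (y j s) + dW (y j s) (y j t) + dW (y j t) (g (zz j t))"
      using W.triangle[of "g (zz j s)" "y j s" "g (zz j t)"] W.triangle[of "y j s" "y j t" "g (zz j t)"]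
        gW zzZ yW by fastforce
    also have "\<dots> \<le> \<bar>s - t\<bar> + 2 / (real j + 1)"
      using a lip[of j s t] W.commute[of "g (zz j s)" "y j s"] by simp
    finally show ?thesis .
  qed
  have E2: "dZ (zz j t) (zz j (-t)) \<ge> 2 * \<bar>t\<bar> * (1 - e j) - 2 / (real j + 1)" if "\<bar>t\<bar> \<le> real j" for j t
  proof -
    have that2: "\<bar>-t\<bar> \<le> real j" using that by simp
    have a: "dW (y j t) (g (zz j t)) < 1 / (real j + 1)" "dW (y j (-t)) (g (zz j (-t))) < 1 / (real j + 1)"
      using zzP[OF that] zzP[OF that2] unfolding Pz_def by auto
    have "dW (y j t) (y j (-t)) \<le> dW (y j t) (g (zz j t)) + dW (g (zz j t)) (g (zz j (-t))) + dW (g (zz j (-t))) (y j (-t))"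
      using W.triangle[of "y j t" "g (zz j t)" "y j (-t)"] W.triangle[of "g (zz j t)" "g (zz j (-t))" "y j (-t)"]
        gW zzZ yW by fastforce
    then show ?thesis using a sym[OF that] gd zzZ W.commute[of "g (zz j (-t))" "y j (-t)"] by simp
  qed
  have zzB: "zz j t \<in> Z.mcball z0 (B + \<bar>t\<bar>)" if "\<bar>t\<bar> \<le> real j" for j t
    using zzP[OF that] z0Z unfolding Pz_def by simp
  have psi_ge: "\<forall>\<^sub>F i in sequentially. X \<le> real (\<sigma> i)" if "strict_mono \<sigma>" for \<sigma> :: "nat \<Rightarrow> nat" and X
  proof -
    obtain N :: nat where "X \<le> real N" using real_arch_simple by blast
    then show ?thesis unfolding eventually_sequentially
    proof (intro exI[of _ N] allI impI)
      fix i assume "X \<le> real N" "N \<le> i"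
      moreover have "i \<le> \<sigma> i" using seq_suble[OF that] .
      ultimately show "X \<le> real (\<sigma> i)" by linarith
    qed
  qed
  have sub: "\<exists>r'. strict_mono r' \<and> (\<exists>L. limitin Z.mtopology (\<lambda>i. zz (\<sigma> (r' i)) t) L sequentially)"
    if "strict_mono \<sigma>" for \<sigma> :: "nat \<Rightarrow> nat" and t
  proof -
    obtain N :: nat where N: "\<bar>t\<bar> \<le> real N" using real_arch_simple by blast
    define w where "w i = zz (\<sigma> (i + N)) t" for i
    have "range w \<subseteq> Z.mcball z0 (B + \<bar>t\<bar>)"
    proof clarify
      fix i
      have "real N \<le> real (\<sigma> (i + N))" using seq_suble[OF that, of "i+N"] by simp
      then have "\<bar>t\<bar> \<le> real (\<sigma> (i + N))" using N by linarith
      then show "w i \<in> Z.mcball z0 (B + \<bar>t\<bar>)" unfolding w_def by (rule zzB)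
    qed
    then obtain l r where lr: "strict_mono r" "limitin Z.mtopology (w \<circ> r) l sequentially"
      using cpt[OF z0Z] unfolding Z.compactin_sequentially by blast
    have "strict_mono (\<lambda>i. r i + N)" using lr(1) by (simp add: strict_mono_def)
    moreover have "(\<lambda>i. zz (\<sigma> (r i + N)) t) = w \<circ> r" unfolding w_def by auto
    ultimately show ?thesis using lr(2) by (intro exI[of _ "\<lambda>i. r i + N"]) auto
  qed
  define qq :: "nat \<Rightarrow> real" where "qq = from_nat_into \<rat>"
  define PP where "PP n \<sigma> \<longleftrightarrow> (\<exists>L. limitin Z.mtopology (\<lambda>i. zz (\<sigma> i) (qq n)) L sequentially)"
    for n and \<sigma> :: "nat \<Rightarrow> nat"
  interpret D: subseqs PP
  proof
    fix n and s :: "nat \<Rightarrow> nat" assume "strict_mono s"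
    from sub[OF this, of "qq n"] show "\<exists>r'. strict_mono r' \<and> PP n (s \<circ> r')"
      unfolding PP_def by (auto simp: o_def)
  qed
  define \<psi> where "\<psi> = D.diagseq"
  have psi: "strict_mono \<psi>" unfolding \<psi>_def by (rule D.subseq_diagseq)
  have conv_q: "\<exists>L. limitin Z.mtopology (\<lambda>i. zz (\<psi> i) q) L sequentially" if qR: "q \<in> \<rat>" for q
  proof -
    have "\<rat> \<noteq> ({} :: real set)" using Rats_0 by blast
    then obtain n where n: "q = qq n" unfolding qq_def
      using from_nat_into_surj[OF countable_rat qR] by blast
    have "PP n (D.diagseq \<circ> (+) (Suc n))"
    proof (rule D.diagseq_holds)
      fix r s :: "nat \<Rightarrow> nat" and n assume "strict_mono r" "PP n s"
      show "PP n (s \<circ> r)"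
      proof -
        from \<open>PP n s\<close> obtain L where "limitin Z.mtopology (\<lambda>i. zz (s i) (qq n)) L sequentially"
          unfolding PP_def by blast
        from limitin_subsequence[OF \<open>strict_mono r\<close> this]
        show ?thesis unfolding PP_def by (simp add: o_def) blast
      qed
    qed
    then obtain L where "limitin Z.mtopology (\<lambda>i. zz ((D.diagseq \<circ> (+) (Suc n)) i) (qq n)) L sequentially"
      unfolding PP_def by blast
    moreover have "(\<lambda>i. zz ((D.diagseq \<circ> (+) (Suc n)) i) (qq n)) = (\<lambda>i. zz (D.diagseq (i + Suc n)) (qq n))"
      by (simp add: o_def add.commute)
    ultimately have "limitin Z.mtopology (\<lambda>i. zz (D.diagseq (i + Suc n)) (qq n)) L sequentially"
      by simp
    then have "limitin Z.mtopology (\<lambda>i. zz (D.diagseq i) (qq n)) L sequentially"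
      by (rule limitin_sequentially_offset_rev[where f = "\<lambda>i. zz (D.diagseq i) (qq n)"])
    then show ?thesis unfolding n \<psi>_def by blast
  qed
  have inv_small: "2 / (x + 1) < \<delta>" if "0 < \<delta>" "2 / \<delta> \<le> x" for x \<delta> :: real
  proof -
    have "0 < 2 / \<delta>" using that by simp
    then have xp: "0 < x + 1" using that by linarith
    have "2 < \<delta> * (x + 1)" using that by (simp add: field_simps)
    then show ?thesis using xp by (simp add: field_simps)
  qed
  have ev_small: "\<forall>\<^sub>F i in sequentially. 2 / (real (\<psi> i) + 1) < \<delta>" if "0 < \<delta>" for \<delta>
    using psi_ge[OF psi, of "2 / \<delta>"] by eventually_elim (rule inv_small[OF that])
  have t2: "(\<lambda>i. 2 / (real (\<psi> i) + 1)) \<longlonglongrightarrow> 0"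
  proof (rule tendstoI)
    fix \<delta> :: real assume "0 < \<delta>"
    from ev_small[OF this] show "\<forall>\<^sub>F i in sequentially. dist (2 / (real (\<psi> i) + 1)) 0 < \<delta>"
      by eventually_elim (simp add: dist_real_def)
  qed
  have cauchy: "Z.MCauchy (\<lambda>i. zz (\<psi> i) t)" for t
    unfolding Z.MCauchy_def
  proof (intro conjI allI impI)
    show "range (\<lambda>i. zz (\<psi> i) t) \<subseteq> Z" using zzZ by auto
    fix \<epsilon> :: real assume ep: "\<epsilon> > 0"
    obtain q where q: "q \<in> \<rat>" "t < q" "q < t + \<epsilon> / 8" using Rats_dense_in_real[of t "t + \<epsilon>/8"] ep by auto
    obtain L where L: "limitin Z.mtopology (\<lambda>i. zz (\<psi> i) q) L sequentially" using conv_q[OF q(1)] by blast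
    have "Z.MCauchy (\<lambda>i. zz (\<psi> i) q)"
      by (rule Z.convergent_imp_MCauchy[OF _ L]) (use zzZ in auto)
    then obtain N1 where N1: "\<And>n n'. N1 \<le> n \<Longrightarrow> N1 \<le> n' \<Longrightarrow> dZ (zz (\<psi> n) q) (zz (\<psi> n') q) < \<epsilon> / 4"
      unfolding Z.MCauchy_def using ep by (meson divide_pos_pos zero_less_numeral)
    have "\<forall>\<^sub>F i in sequentially. max \<bar>t\<bar> \<bar>q\<bar> \<le> real (\<psi> i) \<and> 2 / (real (\<psi> i) + 1) < \<epsilon> / 8"
      using psi_ge[OF psi, of "max \<bar>t\<bar> \<bar>q\<bar>"] ev_small[of "\<epsilon>/8"] ep by (simp add: eventually_conj_iff)
    then obtain N2 where N2: "\<And>i. N2 \<le> i \<Longrightarrow> max \<bar>t\<bar> \<bar>q\<bar> \<le> real (\<psi> i) \<and> 2 / (real (\<psi> i) + 1) < \<epsilon> / 8"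
      unfolding eventually_sequentially by blast
    have near: "dZ (zz (\<psi> n) t) (zz (\<psi> n) q) < \<epsilon> / 4" if "N2 \<le> n" for n
    proof -
      have "dZ (zz (\<psi> n) t) (zz (\<psi> n) q) \<le> \<bar>t - q\<bar> + 2 / (real (\<psi> n) + 1)"
        using N2[OF that] by (intro E1) auto
      then show ?thesis using N2[OF that] q by linarith
    qed
    show "\<exists>N. \<forall>n n'. N \<le> n \<longrightarrow> N \<le> n' \<longrightarrow> dZ (zz (\<psi> n) t) (zz (\<psi> n') t) < \<epsilon>"
    proof (intro exI[of _ "max N1 N2"] allI impI)
      fix n n' assume "max N1 N2 \<le> n" "max N1 N2 \<le> n'"
      then have h: "N1 \<le> n" "N1 \<le> n'" "N2 \<le> n" "N2 \<le> n'" by auto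
      have "dZ (zz (\<psi> n) t) (zz (\<psi> n') t) \<le> dZ (zz (\<psi> n) t) (zz (\<psi> n) q) + dZ (zz (\<psi> n) q) (zz (\<psi> n') q) + dZ (zz (\<psi> n') q) (zz (\<psi> n') t)"
        using Z.triangle zzZ by (meson add_mono order_trans order_refl)
      also have "\<dots> < \<epsilon>"
        using near[OF h(3)] near[OF h(4)] N1[OF h(1,2)] Z.commute[of "zz (\<psi> n') q" "zz (\<psi> n') t"] ep by linarith
      finally show "dZ (zz (\<psi> n) t) (zz (\<psi> n') t) < \<epsilon>" .
    qed
  qed
  have conv: "\<exists>L. limitin Z.mtopology (\<lambda>i. zz (\<psi> i) t) L sequentially" for t
  proof -
    obtain r' L where r': "strict_mono r'" "limitin Z.mtopology (\<lambda>i. zz (\<psi> (r' i)) t) L sequentially"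
      using sub[OF psi, of t] by blast
    have "limitin Z.mtopology ((\<lambda>i. zz (\<psi> i) t) \<circ> r') L sequentially" using r'(2) by (simp add: o_def)
    from Z.MCauchy_convergent_subsequence[OF cauchy r'(1) this] show ?thesis by blast
  qed
  define \<gamma> where "\<gamma> t = (SOME L. limitin Z.mtopology (\<lambda>i. zz (\<psi> i) t) L sequentially)" for t
  have lim: "limitin Z.mtopology (\<lambda>i. zz (\<psi> i) t) (\<gamma> t) sequentially" for t
    unfolding \<gamma>_def using conv[of t] by (rule someI_ex)
  have gZ: "\<gamma> t \<in> Z" for t using lim[of t] Z.limitin_metric by blast
  have dlim: "(\<lambda>i. dZ (zz (\<psi> i) s) (zz (\<psi> i) t)) \<longlonglongrightarrow> dZ (\<gamma> s) (\<gamma> t)" for s t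
    by (rule limitin_dist_tendsto[OF msZ lim lim])
  have upper: "dZ (\<gamma> s) (\<gamma> t) \<le> \<bar>s - t\<bar>" for s t
  proof (rule tendsto_le[OF trivial_limit_sequentially _ dlim])
    show "(\<lambda>i. \<bar>s - t\<bar> + 2 / (real (\<psi> i) + 1)) \<longlonglongrightarrow> \<bar>s - t\<bar>"
      using tendsto_add[OF tendsto_const t2] by simp
    show "\<forall>\<^sub>F i in sequentially. dZ (zz (\<psi> i) s) (zz (\<psi> i) t) \<le> \<bar>s - t\<bar> + 2 / (real (\<psi> i) + 1)"
      using psi_ge[OF psi, of "max \<bar>s\<bar> \<bar>t\<bar>"] by eventually_elim (intro E1, auto)
  qed
  have lower: "2 * \<bar>t\<bar> \<le> dZ (\<gamma> t) (\<gamma> (-t))" for t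
  proof (rule tendsto_le[OF trivial_limit_sequentially dlim])
    have "(e \<circ> \<psi>) \<longlonglongrightarrow> 0" by (rule LIMSEQ_subseq_LIMSEQ[OF e0 psi])
    then have "(\<lambda>i. 2 * \<bar>t\<bar> * (1 - e (\<psi> i)) - 2 / (real (\<psi> i) + 1)) \<longlonglongrightarrow> 2 * \<bar>t\<bar> * (1 - 0) - 0"
      by (intro tendsto_intros t2) (simp add: o_def)
    then show "(\<lambda>i. 2 * \<bar>t\<bar> * (1 - e (\<psi> i)) - 2 / (real (\<psi> i) + 1)) \<longlonglongrightarrow> 2 * \<bar>t\<bar>" by simp
    show "\<forall>\<^sub>F i in sequentially. 2 * \<bar>t\<bar> * (1 - e (\<psi> i)) - 2 / (real (\<psi> i) + 1) \<le> dZ (zz (\<psi> i) t) (zz (\<psi> i) (-t))"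
      using psi_ge[OF psi, of "\<bar>t\<bar>"] by eventually_elim (rule E2)
  qed
  have geo_le: "t - s \<le> dZ (\<gamma> s) (\<gamma> t)" if "s \<le> t" for s t
  proof -
    define T where "T = max \<bar>s\<bar> \<bar>t\<bar>"
    have "2 * T \<le> dZ (\<gamma> T) (\<gamma> (-T))" using lower[of T] T_def by simp
    also have "\<dots> \<le> dZ (\<gamma> T) (\<gamma> t) + dZ (\<gamma> t) (\<gamma> s) + dZ (\<gamma> s) (\<gamma> (-T))"
      using Z.triangle gZ by (meson add_mono order_trans order_refl)
    also have "\<dots> \<le> \<bar>T - t\<bar> + dZ (\<gamma> s) (\<gamma> t) + \<bar>s - (-T)\<bar>"
      using upper[of T t] upper[of s "-T"] Z.commute[of "\<gamma> t" "\<gamma> s"] by linarith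
    finally show ?thesis using that unfolding T_def by (simp add: abs_if split: if_splits)
  qed
  have geo: "dZ (\<gamma> s) (\<gamma> t) = \<bar>s - t\<bar>" for s t
  proof (cases "s \<le> t")
    case True then show ?thesis using geo_le[OF True] upper[of s t] by simp
  next
    case False then show ?thesis using geo_le[of t s] upper[of s t] Z.commute[of "\<gamma> s" "\<gamma> t"] by simp
  qed
  have limz: "limitin Z.mtopology (\<lambda>i. zz (\<psi> i) 0) z sequentially"
    unfolding Z.limitin_metric
  proof (intro conjI allI impI zZ)
    fix \<epsilon> :: real assume ep: "\<epsilon> > 0"
    have e1: "\<forall>\<^sub>F i in sequentially. dW (y (\<psi> i) 0) (g z) < \<epsilon> / 2"
      using ev_small[OF half_gt_zero[OF ep]] by eventually_elim (use yz in \<open>smt (verit)\<close>)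
    show "\<forall>\<^sub>F i in sequentially. zz (\<psi> i) 0 \<in> Z \<and> dZ (zz (\<psi> i) 0) z < \<epsilon>"
      using e1 ev_small[OF half_gt_zero[OF ep]]
    proof eventually_elim
      case (elim i)
      have P: "Pz (\<psi> i) 0 (zz (\<psi> i) 0)" by (rule zzP) simp
      have a: "dW (y (\<psi> i) 0) (g (zz (\<psi> i) 0)) < 1 / (real (\<psi> i) + 1)" using P unfolding Pz_def by simp
      have b: "1 / (real (\<psi> i) + 1) \<le> 2 / (real (\<psi> i) + 1)" by (simp add: divide_right_mono)
      have "dZ (zz (\<psi> i) 0) z = dW (g (zz (\<psi> i) 0)) (g z)" using gd zzZ zZ by simp
      also have "\<dots> \<le> dW (g (zz (\<psi> i) 0)) (y (\<psi> i) 0) + dW (y (\<psi> i) 0) (g z)"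
        using W.triangle[of "g (zz (\<psi> i) 0)" "y (\<psi> i) 0" "g z"] gW[OF zzZ] gW[OF zZ] yW by blast
      also have "\<dots> < \<epsilon>" using a b elim W.commute[of "g (zz (\<psi> i) 0)" "y (\<psi> i) 0"] by linarith
      finally show ?case using zzZ by simp
    qed
  qed
  have g0: "\<gamma> 0 = z"
    using Z.limitin_metric_unique[OF lim limz] by simp
  have unif: "\<forall>\<^sub>F i in sequentially. \<forall>t\<in>{-T..T}. dW (y (\<psi> i) t) (g (\<gamma> t)) < \<epsilon>"
    if Tp: "T > 0" and ep: "\<epsilon> > 0" for T \<epsilon>
  proof -
    define h where "h = \<epsilon> / 5"
    have hp: "h > 0" unfolding h_def using ep by simp
    define M where "M = nat \<lceil>2 * T / h\<rceil>"
    define G where "G = (\<lambda>m. - T + real m * h) ` {..M}"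
    have fG: "finite G" unfolding G_def by simp
    have evG: "\<forall>\<^sub>F i in sequentially. \<forall>p\<in>G. dZ (zz (\<psi> i) p) (\<gamma> p) < h"
    proof (rule eventually_ball_finite[OF fG], rule ballI)
      fix p
      show "\<forall>\<^sub>F i in sequentially. dZ (zz (\<psi> i) p) (\<gamma> p) < h"
        using lim[of p] hp unfolding Z.limitin_metric by (auto elim: eventually_mono)
    qed
    show ?thesis
      using evG psi_ge[OF psi, of "T + h"] ev_small[OF hp]
    proof eventually_elim
      case (elim i)
      show ?case
      proof
        fix t assume t: "t \<in> {-T..T}"
        define u where "u = (t + T) / h"
        have u0: "0 \<le> u" unfolding u_def using t hp by auto
        define m where "m = nat \<lfloor>u\<rfloor>"
        have fl: "of_int \<lfloor>u\<rfloor> \<le> u" "u < of_int \<lfloor>u\<rfloor> + 1" using floor_correct[of u] by auto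
        have rm: "real m = of_int \<lfloor>u\<rfloor>" unfolding m_def using u0 by simp
        define p where "p = - T + real m * h"
        have uh: "u * h = t + T" unfolding u_def using hp by simp
        have "real m * h \<le> u * h" using fl rm hp by (simp add: mult_right_mono)
        then have p1: "p \<le> t" unfolding p_def using uh by simp
        have "u * h < (real m + 1) * h" using fl rm hp by (simp add: mult_strict_right_mono)
        then have p2: "t < p + h" unfolding p_def using uh by (simp add: algebra_simps)
        have p3: "- T \<le> p" unfolding p_def using hp by simp
        have "u \<le> 2 * T / h" unfolding u_def using t hp by (simp add: divide_right_mono)
        then have "\<lfloor>u\<rfloor> \<le> \<lceil>2 * T / h\<rceil>" using floor_le_ceiling[of u] ceiling_mono by (meson order_trans)
        then have "m \<le> M" unfolding M_def m_def by (rule nat_mono)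
        then have pG: "p \<in> G" unfolding G_def p_def by blast
        have tj: "\<bar>t\<bar> \<le> real (\<psi> i)" using t elim hp by auto
        have pj: "\<bar>p\<bar> \<le> real (\<psi> i)" using p1 p3 t elim hp by auto
        have a: "dW (y (\<psi> i) t) (g (zz (\<psi> i) t)) < 1 / (real (\<psi> i) + 1)"
          using zzP[OF tj] unfolding Pz_def by simp
        have b: "1 / (real (\<psi> i) + 1) \<le> 2 / (real (\<psi> i) + 1)" by (simp add: divide_right_mono)
        have c: "dZ (zz (\<psi> i) t) (zz (\<psi> i) p) \<le> \<bar>t - p\<bar> + 2 / (real (\<psi> i) + 1)"
          by (rule E1[OF tj pj])
        have dd: "dZ (zz (\<psi> i) p) (\<gamma> p) < h" using elim pG by blast
        have ee: "dZ (\<gamma> p) (\<gamma> t) = \<bar>p - t\<bar>" by (rule geo)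
        have "dW (y (\<psi> i) t) (g (\<gamma> t)) \<le> dW (y (\<psi> i) t) (g (zz (\<psi> i) t)) + dW (g (zz (\<psi> i) t)) (g (\<gamma> t))"
          using W.triangle[of "y (\<psi> i) t" "g (zz (\<psi> i) t)" "g (\<gamma> t)"] gW[OF zzZ] gW[OF gZ] yW by blast
        also have "dW (g (zz (\<psi> i) t)) (g (\<gamma> t)) = dZ (zz (\<psi> i) t) (\<gamma> t)" using gd zzZ gZ by simp
        also have "dZ (zz (\<psi> i) t) (\<gamma> t) \<le> dZ (zz (\<psi> i) t) (zz (\<psi> i) p) + dZ (zz (\<psi> i) p) (\<gamma> p) + dZ (\<gamma> p) (\<gamma> t)"
          using Z.triangle[of "zz (\<psi> i) t" "zz (\<psi> i) p" "\<gamma> p"] Z.triangle[of "zz (\<psi> i) t" "\<gamma> p" "\<gamma> t"] zzZ gZ by fastforce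
        finally show "dW (y (\<psi> i) t) (g (\<gamma> t)) < \<epsilon>"
          using a b c dd ee p1 p2 elim unfolding h_def by linarith
      qed
    qed
  qed
  have rg: "range \<gamma> \<subseteq> Z" using gZ by auto
  show ?thesis
  proof (intro exI[of _ \<gamma>] exI[of _ \<psi>] conjI allI impI psi rg g0 geo)
    fix T \<epsilon> :: real assume "T > 0" "\<epsilon> > 0"
    from unif[OF this] show "\<forall>\<^sub>F i in sequentially. \<forall>t\<in>{-T..T}. dW (y (\<psi> i) t) (g (\<gamma> t)) < \<epsilon>" .
  qed
qed


theorem proposition4p2:
  fixes X :: "'a set" and d :: "'a \<Rightarrow> 'a \<Rightarrow> real"
    and \<epsilon> :: "nat \<Rightarrow> real" and A :: "'a set" and x0 :: 'a and r :: "nat \<Rightarrow> real"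
    and Z :: "'b set" and dZ :: "'b \<Rightarrow> 'b \<Rightarrow> real" and z0 :: 'b
    and W :: "'c set" and dW :: "'c \<Rightarrow> 'c \<Rightarrow> real"
    and f :: "nat \<Rightarrow> 'a \<Rightarrow> 'c" and g :: "'b \<Rightarrow> 'c"
  assumes "doubling_mspace X d" and "proper_mspace X d"
    and "\<And>k. \<epsilon> k > 0" and "\<epsilon> \<longlonglongrightarrow> 0"
    and "A \<subseteq> X"
    and "\<And>x. x \<in> A \<Longrightarrow> \<exists>\<Gamma>. good_curve_at X d \<epsilon> x \<Gamma>"
    and "t_density_point X d A x0"
    and "\<And>n. r n > 0" and "r \<longlonglongrightarrow> 0"
    and "pGH_realization X (\<lambda>n x y. d x y / r n) (\<lambda>n. x0) Z dZ z0 W dW f g"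
  shows "\<forall>z\<in>Z. \<exists>\<gamma> :: real \<Rightarrow> 'b.
           range \<gamma> \<subseteq> Z \<and> z \<in> range \<gamma> \<and>
           (\<forall>s t. dZ (\<gamma> s) (\<gamma> t) = \<bar>s - t\<bar>) \<and>
           (\<exists>\<phi> :: nat \<Rightarrow> nat. \<exists>\<Gamma> :: nat \<Rightarrow> real \<Rightarrow> 'a. \<exists>a :: nat \<Rightarrow> 'a.
              strict_mono \<phi> \<and>
              (\<forall>j. a j \<in> A \<and> good_curve_at X d \<epsilon> (a j) (\<Gamma> j)) \<and>
              (\<forall>T>0. \<forall>e>0. \<forall>\<^sub>F j in sequentially. \<forall>t\<in>{-T..T}.
                 dW (f (\<phi> j) (\<Gamma> j (r (\<phi> j) * t))) (g (\<gamma> t)) < e))"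
proof
  fix z assume zZ: "z \<in> Z"
  note pGH = assms(10)[unfolded pGH_realization_def]
  have msW: "Metric_space W dW" and pZ: "proper_mspace Z dZ" and z0Z: "z0 \<in> Z"
    and isoX: "\<And>n. isometric_embedding X (\<lambda>x y. d x y / r n) W dW (f n)"
    and isoZ: "isometric_embedding Z dZ W dW g"
    and base: "(\<lambda>n. dW (f n x0) (g z0)) \<longlonglongrightarrow> 0"
    and GH: "\<And>R e. e > 0 \<Longrightarrow> (\<forall>\<^sub>F n in sequentially.
        (\<forall>x\<in>Metric_space.mcball X (\<lambda>x y. d x y / r n) x0 R. \<exists>z\<in>Z. dW (f n x) (g z) < e) \<and>
        (\<forall>z\<in>Metric_space.mcball Z dZ z0 R. \<exists>x\<in>X. dW (f n x) (g z) < e))"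
    using pGH by auto
  have x0X: "x0 \<in> X" using pGH by auto
  have msXn: "\<And>n. Metric_space X (\<lambda>x y. d x y / r n)" using pGH by auto
  have msX: "Metric_space X d" using assms(2) unfolding proper_mspace_def by blast
  have msZ: "Metric_space Z dZ" using pZ unfolding proper_mspace_def by blast
  interpret X: Metric_space X d by fact
  interpret Z: Metric_space Z dZ by fact
  interpret W: Metric_space W dW by fact
  have rp: "\<And>n. r n > 0" by fact
  have fW: "\<And>n x. x \<in> X \<Longrightarrow> f n x \<in> W"
    and fd: "\<And>n x x'. x \<in> X \<Longrightarrow> x' \<in> X \<Longrightarrow> dW (f n x) (f n x') = d x x' / r n"
    using isoX unfolding isometric_embedding_def by auto
  have gW: "\<And>x. x \<in> Z \<Longrightarrow> g x \<in> W" and gd: "\<And>x x'. x \<in> Z \<Longrightarrow> x' \<in> Z \<Longrightarrow> dW (g x) (g x') = dZ x x'"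
    using isoZ unfolding isometric_embedding_def by auto
  define Cz where "Cz = dZ z0 z"
  have Cz0: "0 \<le> Cz" unfolding Cz_def by simp
  define R where "R j = real j + Cz + 3" for j
  have Rpos: "R j \<ge> 3" for j unfolding R_def using Cz0 by simp
  define \<delta> where "\<delta> j = 1 / ((real j + 1) * (R j + 1))" for j
  have \<delta>p: "\<delta> j > 0" for j unfolding \<delta>_def using Rpos[of j] by simp
  have "\<forall>j. \<exists>\<rho>0>0. \<forall>\<rho> x. 0 < \<rho> \<and> \<rho> < \<rho>0 \<and> x \<in> X \<and> d x x0 < \<rho> \<longrightarrow> (\<exists>b\<in>A. d x b < \<delta> j * \<rho>)"
    using density_approx[OF msX assms(7) assms(5) \<delta>p] by blast
  then obtain \<rho>0 where \<rho>0: "\<And>j. \<rho>0 j > 0"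
    and dens: "\<And>j \<rho> x. 0 < \<rho> \<Longrightarrow> \<rho> < \<rho>0 j \<Longrightarrow> x \<in> X \<Longrightarrow> d x x0 < \<rho> \<Longrightarrow> \<exists>b\<in>A. d x b < \<delta> j * \<rho>"
    by metis
  define Pn where "Pn n j \<longleftrightarrow>
      (\<forall>x\<in>X. d x0 x / r n \<le> R j \<longrightarrow> (\<exists>z'\<in>Z. dW (f n x) (g z') < 1 / (real j + 1))) \<and>
      (\<forall>z'\<in>Z. dZ z0 z' \<le> R j \<longrightarrow> (\<exists>x\<in>X. dW (f n x) (g z') < 1 / (real j + 1))) \<and>
      dW (f n x0) (g z0) < 1 \<and> r n * (R j + 1) < \<rho>0 j \<and> r n * ((real j + 1) * R j) \<le> 1" for n j
  have evP: "\<forall>\<^sub>F n in sequentially. Pn n j" for j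
  proof -
    have e1: "1 / (real j + 1) > 0" by simp
    have c1: "\<forall>\<^sub>F n in sequentially. dW (f n x0) (g z0) < 1"
      using tendstoD[OF base zero_less_one] by (simp add: dist_real_def)
    have Rp1: "R j + 1 > 0" using Rpos[of j] by simp
    have Rp2: "(real j + 1) * R j > 0" using Rpos[of j] by simp
    have c2: "\<forall>\<^sub>F n in sequentially. r n < \<rho>0 j / (R j + 1)"
      using tendstoD[OF assms(9), of "\<rho>0 j / (R j + 1)"] \<rho>0[of j] Rp1
      by (simp add: dist_real_def) (auto elim: eventually_mono)
    have c3: "\<forall>\<^sub>F n in sequentially. r n < 1 / ((real j + 1) * R j)"
      using tendstoD[OF assms(9), of "1 / ((real j + 1) * R j)"] Rp2
      by (simp add: dist_real_def) (auto elim: eventually_mono)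
    show ?thesis
      using GH[OF e1, of "R j"] c1 c2 c3
    proof eventually_elim
      case (elim n)
      have m1: "x \<in> Metric_space.mcball X (\<lambda>x y. d x y / r n) x0 (R j)" if "x \<in> X" "d x0 x / r n \<le> R j" for x
        using that x0X by (simp add: Metric_space.in_mcball[OF msXn])
      have m2: "z' \<in> Metric_space.mcball Z dZ z0 (R j)" if "z' \<in> Z" "dZ z0 z' \<le> R j" for z'
        using that z0Z by simp
      have "r n * (R j + 1) < \<rho>0 j" using elim(3) Rp1 by (simp add: field_simps)
      moreover have "r n * ((real j + 1) * R j) \<le> 1" using elim(4) Rp2 by (simp add: field_simps)
      ultimately show ?case unfolding Pn_def using elim(1,2) m1 m2 by blast
    qed
  qed
  obtain \<phi>0 where \<phi>0: "strict_mono \<phi>0" and P\<phi>: "\<And>j. Pn (\<phi>0 j) j"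
    using select_subseq[of Pn, OF evP] by blast
  show "\<exists>\<gamma>. range \<gamma> \<subseteq> Z \<and> z \<in> range \<gamma> \<and> (\<forall>s t. dZ (\<gamma> s) (\<gamma> t) = \<bar>s - t\<bar>) \<and>
          (\<exists>\<phi> \<Gamma> a. strict_mono \<phi> \<and> (\<forall>j. a j \<in> A \<and> good_curve_at X d \<epsilon> (a j) (\<Gamma> j)) \<and>
              (\<forall>T>0. \<forall>e>0. \<forall>\<^sub>F j in sequentially. \<forall>t\<in>{- T..T}. dW (f (\<phi> j) (\<Gamma> j (r (\<phi> j) * t))) (g (\<gamma> t)) < e))"
  proof -
    define Q where "Q j p \<longleftrightarrow> fst p \<in> A \<and> good_curve_at X d \<epsilon> (fst p) (snd p) \<and>
       d x0 (fst p) / r (\<phi>0 j) < Cz + 3 \<and> dW (f (\<phi>0 j) (fst p)) (g z) < 2 / (real j + 1)"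
      for j and p :: "'a \<times> (real \<Rightarrow> 'a)"
    have "\<exists>p. Q j p" for j
    proof -
      define n where "n = \<phi>0 j"
      have fW': "\<And>x. x \<in> X \<Longrightarrow> f n x \<in> W" using fW by blast
      have P: "Pn n j" unfolding n_def by (rule P\<phi>)
      have rn: "r n > 0" by (rule rp)
      have j1: "1 / (real j + 1) \<le> 1" by simp
      have "dZ z0 z \<le> R j" unfolding R_def Cz_def by simp
      then obtain x where xX: "x \<in> X" and xz: "dW (f n x) (g z) < 1 / (real j + 1)"
        using P zZ unfolding Pn_def by blast
      have "dW (f n x0) (f n x) \<le> dW (f n x0) (g z0) + dW (g z0) (g z) + dW (g z) (f n x)"
        using W.triangle[of "f n x0" "g z0" "f n x"] W.triangle[of "g z0" "g z" "f n x"]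
          fW'[OF x0X] fW'[OF xX] gW[OF z0Z] gW[OF zZ] by linarith
      also have "\<dots> < Cz + 2"
        using P xz j1 gd[OF z0Z zZ] W.commute[of "g z" "f n x"] unfolding Pn_def Cz_def by linarith
      finally have "d x0 x / r n < Cz + 2" using fd[OF x0X xX] by simp
      then have dx: "d x0 x < r n * (Cz + 2)" using rn by (simp add: field_simps)
      define \<rho> where "\<rho> = r n * (R j + 1)"
      have \<rho>p: "0 < \<rho>" unfolding \<rho>_def using rn Rpos[of j] by simp
      have \<rho>l: "\<rho> < \<rho>0 j" using P unfolding Pn_def \<rho>_def by simp
      have "r n * (Cz + 2) \<le> \<rho>" unfolding \<rho>_def R_def using rn by (intro mult_left_mono) auto
      then have "d x x0 < \<rho>" using dx X.commute by simp
      then obtain b where bA: "b \<in> A" and db: "d x b < \<delta> j * \<rho>"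
        using dens[OF \<rho>p \<rho>l xX] by blast
      have "\<delta> j * \<rho> = r n / (real j + 1)" 
      proof -
        have ne: "R j + 1 \<noteq> 0" "real j + 1 \<noteq> 0" using Rpos[of j] by linarith+
        have "\<delta> j * \<rho> = (r n * (R j + 1)) / ((real j + 1) * (R j + 1))" unfolding \<delta>_def \<rho>_def by simp
        also have "\<dots> = r n / (real j + 1)" using ne(1) by (rule mult_divide_mult_cancel_right)
        finally show ?thesis .
      qed
      then have dbr: "d x b < r n / (real j + 1)" using db by simp
      then have "d x b / r n < (r n / (real j + 1)) / r n" using rn by (rule divide_strict_right_mono)
      then have db': "d x b / r n < 1 / (real j + 1)" using rn by simp
      have bX: "b \<in> X" using bA assms(5) by blast
      obtain \<Gamma> where G: "good_curve_at X d \<epsilon> b \<Gamma>" using assms(6)[OF bA] by blast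
      have "d x0 b \<le> d x0 x + d x b" using X.triangle x0X xX bX by blast
      also have "\<dots> < r n * (Cz + 2) + r n / (real j + 1)" using dx dbr by linarith
      also have "\<dots> \<le> r n * (Cz + 3)"
      proof -
        have "r n / (real j + 1) \<le> r n" using rn by (simp add: field_simps)
        then show ?thesis by (simp add: algebra_simps)
      qed
      finally have q3: "d x0 b / r n < Cz + 3" using rn by (simp add: field_simps)
      have "dW (f n b) (g z) \<le> dW (f n b) (f n x) + dW (f n x) (g z)"
        using W.triangle fW'[OF bX] fW'[OF xX] gW[OF zZ] by blast
      also have "\<dots> < 2 / (real j + 1)"
        using db' xz fd[OF bX xX] X.commute[of b x] by simp
      finally have q4: "dW (f n b) (g z) < 2 / (real j + 1)" .
      show ?thesis unfolding Q_def using bA G q3 q4 n_def by (intro exI[of _ "(b, \<Gamma>)"]) simp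
    qed
    then obtain F where F: "\<And>j. Q j (F j)" by metis
    define aa where "aa j = fst (F j)" for j
    define GG where "GG j = snd (F j)" for j
    have aaA: "aa j \<in> A" and goodG: "good_curve_at X d \<epsilon> (aa j) (GG j)"
      and aa3: "d x0 (aa j) / r (\<phi>0 j) < Cz + 3" and aaz: "dW (f (\<phi>0 j) (aa j)) (g z) < 2 / (real j + 1)" for j
      using F[of j] unfolding Q_def aa_def GG_def by auto
    have cprops: "(\<forall>u. GG j u \<in> X) \<and> (\<forall>u v. d (GG j u) (GG j v) \<le> \<bar>u - v\<bar>) \<and> GG j 0 = aa j" for j
      using complete_curve_props[OF msX] goodG[of j] unfolding good_curve_at_def by blast
    have GX: "\<And>j u. GG j u \<in> X" and Glip: "\<And>j u v. d (GG j u) (GG j v) \<le> \<bar>u - v\<bar>"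
      and G0: "\<And>j. GG j 0 = aa j" using cprops by auto
    define y where "y j t = f (\<phi>0 j) (GG j (r (\<phi>0 j) * t))" for j t
    have core_app: "\<exists>\<gamma> \<psi>. strict_mono \<psi> \<and> range \<gamma> \<subseteq> Z \<and> \<gamma> 0 = z \<and> (\<forall>s t. dZ (\<gamma> s) (\<gamma> t) = \<bar>s - t\<bar>) \<and>
       (\<forall>T>0. \<forall>\<epsilon>>0. eventually (\<lambda>i. \<forall>t\<in>{-T..T}. dW (y (\<psi> i) t) (g (\<gamma> t)) < \<epsilon>) sequentially)"
    proof (rule core[OF pZ msW isoZ z0Z, where B = "Cz + 5" and e = "\<lambda>j. \<epsilon> (Suc j)"])
      show "y j t \<in> W" for j t unfolding y_def by (rule fW[OF GX])
      show "dW (y j s) (y j t) \<le> \<bar>s - t\<bar>" for j s t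
      proof -
        have rn: "r (\<phi>0 j) > 0" by (rule rp)
        have "dW (y j s) (y j t) = d (GG j (r (\<phi>0 j) * s)) (GG j (r (\<phi>0 j) * t)) / r (\<phi>0 j)"
          unfolding y_def by (rule fd[OF GX GX])
        also have "\<dots> \<le> \<bar>r (\<phi>0 j) * s - r (\<phi>0 j) * t\<bar> / r (\<phi>0 j)"
          by (rule divide_right_mono[OF Glip]) (use rn in simp)
        also have "\<dots> = \<bar>s - t\<bar>" using rn by (simp add: right_diff_distrib[symmetric] abs_mult)
        finally show ?thesis .
      qed
      show "\<exists>z'\<in>Z. dW (y j t) (g z') < 1 / (real j + 1) \<and> dZ z0 z' \<le> Cz + 5 + \<bar>t\<bar>"
        if tj: "\<bar>t\<bar> \<le> real j" for j t
      proof -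
        define n where "n = \<phi>0 j"
      have fW': "\<And>x. x \<in> X \<Longrightarrow> f n x \<in> W" using fW by blast
        have fW': "\<And>x. x \<in> X \<Longrightarrow> f n x \<in> W" using fW by blast
        have P: "Pn n j" unfolding n_def by (rule P\<phi>)
        have rn: "r n > 0" by (rule rp)
        define u where "u = GG j (r n * t)"
        have uX: "u \<in> X" unfolding u_def by (rule GX)
        have "d (aa j) u \<le> \<bar>0 - r n * t\<bar>" unfolding u_def using Glip[of j 0 "r n * t"] G0[of j] by simp
        also have "\<dots> = r n * \<bar>t\<bar>" using rn by (simp add: abs_mult)
        finally have du: "d (aa j) u \<le> r n * \<bar>t\<bar>" .
        have aX: "aa j \<in> X" using aaA assms(5) by blast
        have "d x0 u \<le> d x0 (aa j) + d (aa j) u" using X.triangle x0X aX uX by blast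
        then have "d x0 u / r n \<le> (d x0 (aa j) + r n * \<bar>t\<bar>) / r n"
          using du rn by (intro divide_right_mono) auto
        also have "\<dots> = d x0 (aa j) / r n + \<bar>t\<bar>" using rn by (simp add: add_divide_distrib)
        finally have du2: "d x0 u / r n < Cz + 3 + \<bar>t\<bar>" using aa3[of j] unfolding n_def by simp
        then have "d x0 u / r n \<le> R j" unfolding R_def using tj by simp
        then obtain z' where z'Z: "z' \<in> Z" and z'd: "dW (f n u) (g z') < 1 / (real j + 1)"
          using P uX unfolding Pn_def by blast
        have j1: "1 / (real j + 1) \<le> 1" by simp
        have fdu: "dW (f n x0) (f n u) = d x0 u / r n" by (rule fd[OF x0X uX])
        have "dZ z0 z' = dW (g z0) (g z')" using gd z0Z z'Z by simp
        also have "\<dots> \<le> dW (g z0) (f n x0) + dW (f n x0) (f n u) + dW (f n u) (g z')"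
          using W.triangle[of "g z0" "f n x0" "g z'"] W.triangle[of "f n x0" "f n u" "g z'"]
            fW'[OF x0X] fW'[OF uX] gW[OF z0Z] gW[OF z'Z] by linarith
        also have "\<dots> \<le> Cz + 5 + \<bar>t\<bar>"
          using P z'd j1 du2 fdu W.commute[of "g z0" "f n x0"] unfolding Pn_def by linarith
        finally show ?thesis using z'Z z'd unfolding y_def u_def n_def by blast
      qed
      show "2 * \<bar>t\<bar> * (1 - \<epsilon> (Suc j)) \<le> dW (y j t) (y j (- t))" if tj: "\<bar>t\<bar> \<le> real j" for j t
      proof (cases "t = 0")
        case True then show ?thesis by simp
      next
        case False
        define n where "n = \<phi>0 j"
      have fW': "\<And>x. x \<in> X \<Longrightarrow> f n x \<in> W" using fW by blast
        have fW': "\<And>x. x \<in> X \<Longrightarrow> f n x \<in> W" using fW by blast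
        have P: "Pn n j" unfolding n_def by (rule P\<phi>)
        have rn: "r n > 0" by (rule rp)
        define h where "h = r n * t"
        have hp: "0 < \<bar>h\<bar>" unfolding h_def using rn False by (simp add: abs_mult)
        have "\<bar>h\<bar> = r n * \<bar>t\<bar>" unfolding h_def using rn by (simp add: abs_mult)
        also have "\<dots> \<le> r n * R j" using tj rn unfolding R_def using Cz0 by (intro mult_left_mono) auto
        also have "\<dots> \<le> 1 / real (Suc j)"
          using P rn unfolding Pn_def by (simp add: field_simps)
        finally have hl: "\<bar>h\<bar> \<le> 1 / real (Suc j)" .
        have "\<bar>d (GG j h) (GG j (-h)) / (2 * \<bar>h\<bar>) - 1\<bar> \<le> \<epsilon> (Suc j)"
          using goodG[of j] hp hl unfolding good_curve_at_def by auto
        then have "1 - \<epsilon> (Suc j) \<le> d (GG j h) (GG j (-h)) / (2 * \<bar>h\<bar>)" by linarith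
        then have "2 * \<bar>h\<bar> * (1 - \<epsilon> (Suc j)) \<le> d (GG j h) (GG j (-h))"
          using hp by (simp add: field_simps)
        then have "2 * \<bar>h\<bar> * (1 - \<epsilon> (Suc j)) / r n \<le> d (GG j h) (GG j (-h)) / r n"
          using rn by (simp add: divide_right_mono)
        moreover have "2 * \<bar>h\<bar> * (1 - \<epsilon> (Suc j)) / r n = 2 * \<bar>t\<bar> * (1 - \<epsilon> (Suc j))"
          unfolding h_def using rn by (simp add: abs_mult)
        moreover have "dW (y j t) (y j (- t)) = d (GG j h) (GG j (-h)) / r n"
          unfolding y_def h_def n_def by (simp add: fd[OF GX GX])
        ultimately show ?thesis by simp
      qed
      show "(\<lambda>j. \<epsilon> (Suc j)) \<longlonglongrightarrow> 0" by (rule LIMSEQ_Suc[OF assms(4)])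
      show "z \<in> Z" by (rule zZ)
      show "dW (y j 0) (g z) < 2 / (real j + 1)" for j
        unfolding y_def using aaz[of j] G0[of j] by simp
    qed
    then obtain \<gamma> \<psi> where psi: "strict_mono \<psi>" and rg: "range \<gamma> \<subseteq> Z" and g0: "\<gamma> 0 = z"
      and geo: "\<forall>s t. dZ (\<gamma> s) (\<gamma> t) = \<bar>s - t\<bar>"
      and unif: "\<forall>T>0. \<forall>\<epsilon>>0. eventually (\<lambda>i. \<forall>t\<in>{-T..T}. dW (y (\<psi> i) t) (g (\<gamma> t)) < \<epsilon>) sequentially"
      by blast
    show ?thesis
    proof (intro exI[of _ \<gamma>] conjI rg geo exI[of _ "\<phi>0 \<circ> \<psi>"] exI[of _ "GG \<circ> \<psi>"] exI[of _ "aa \<circ> \<psi>"])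
      show "z \<in> range \<gamma>" using g0 by (metis rangeI)
      show "strict_mono (\<phi>0 \<circ> \<psi>)" using \<phi>0 psi by (rule strict_mono_o)
      show "\<forall>j. (aa \<circ> \<psi>) j \<in> A \<and> good_curve_at X d \<epsilon> ((aa \<circ> \<psi>) j) ((GG \<circ> \<psi>) j)" using aaA goodG by simp
      show "\<forall>T>0. \<forall>e>0. \<forall>\<^sub>F j in sequentially. \<forall>t\<in>{- T..T}. dW (f ((\<phi>0 \<circ> \<psi>) j) ((GG \<circ> \<psi>) j (r ((\<phi>0 \<circ> \<psi>) j) * t))) (g (\<gamma> t)) < e"
        using unif unfolding y_def by simp
    qed
  qed
qed

end
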